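(* Let $G$ be a signed digraph with $n$ vertices and without negative cycles, and let $f$ be a Boolean network on $G$. The following are equivalent: (1) $f$ has a unique fixed point; (2) $f$ has a synchronizing word of length $n$; (3) $f$ is synchronizing.
   Context: A signed digraph on $V$ is $(V,E)$ with $E\subseteq V\times V\times\{-1,1\}$; cycles have no repeated vertices (a loop is a cycle) and their sign is the product of arc signs. A Boolean network (BN) is $f:\{0,1\}^V\to\{0,1\}^V$; its signed interaction digraph has a positive (negative) arc from $j$ to $i$ iff for some $x$ with $x_j=0$, $f_i(x+e_j)-f_i(x)$ is positive (negative). A BN on $G$ is one whose signed interaction digraph is $G$. $f^i(x)$ is $x$ with $x_i$ replaced by $f_i(x)$; $f^{i_1\cdots i_\ell}=f^{i_\ell}\circ\cdots\circ f^{i_1}$; $w$ is synchronizing if $f^w$ is constant; $f$ is synchronizing if it has a synchronizing word. *)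

theory Defs
  imports Main
begin

text \<open>Vertex set V = the finite type 'v; configurations x in {0,1}^V are 'v => bool
  (True = 1, False = 0). A signed digraph is a set of arcs (j, i, s) with s in {-1,1}.\<close>

type_synonym 'v sdigraph = "('v \<times> 'v \<times> int) set"

definition signed_digraph :: "'v sdigraph \<Rightarrow> bool" where
  "signed_digraph E \<longleftrightarrow> (\<forall>(j, i, s) \<in> E. s = -1 \<or> s = 1)"

definition interaction_digraph :: "(('v \<Rightarrow> bool) \<Rightarrow> ('v \<Rightarrow> bool)) \<Rightarrow> 'v sdigraph" where
  "interaction_digraph f =
     {(j, i, 1) | j i. \<exists>x. \<not> x j \<and> \<not> f x i \<and> f (x(j := True)) i}
   \<union> {(j, i, -1) | j i. \<exists>x. \<not> x j \<and> f x i \<and> \<not> f (x(j := True)) i}"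

definition is_cycle :: "'v sdigraph \<Rightarrow> 'v list \<Rightarrow> int list \<Rightarrow> bool" where
  "is_cycle E vs ss \<longleftrightarrow> vs \<noteq> [] \<and> distinct vs \<and> length ss = length vs \<and>
     (\<forall>t < length vs. (vs ! t, vs ! ((t + 1) mod length vs), ss ! t) \<in> E)"

definition no_negative_cycle :: "'v sdigraph \<Rightarrow> bool" where
  "no_negative_cycle E \<longleftrightarrow> (\<forall>vs ss. is_cycle E vs ss \<longrightarrow> prod_list ss \<noteq> -1)"

text \<open>f^i(x): x with x_i replaced by f_i(x).  f^{i_1...i_l} = f^{i_l} o ... o f^{i_1}.\<close>
definition async_update :: "(('v \<Rightarrow> bool) \<Rightarrow> ('v \<Rightarrow> bool)) \<Rightarrow> 'v \<Rightarrow> ('v \<Rightarrow> bool) \<Rightarrow> ('v \<Rightarrow> bool)" where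
  "async_update f i x = x(i := f x i)"

definition word_update :: "(('v \<Rightarrow> bool) \<Rightarrow> ('v \<Rightarrow> bool)) \<Rightarrow> 'v list \<Rightarrow> ('v \<Rightarrow> bool) \<Rightarrow> ('v \<Rightarrow> bool)" where
  "word_update f w x = fold (async_update f) w x"

definition synchronizing_word :: "(('v \<Rightarrow> bool) \<Rightarrow> ('v \<Rightarrow> bool)) \<Rightarrow> 'v list \<Rightarrow> bool" where
  "synchronizing_word f w \<longleftrightarrow> (\<exists>c. \<forall>x. word_update f w x = c)"

definition synchronizing :: "(('v \<Rightarrow> bool) \<Rightarrow> ('v \<Rightarrow> bool)) \<Rightarrow> bool" where
  "synchronizing f \<longleftrightarrow> (\<exists>w. synchronizing_word f w)"

end

theory Submission
  imports Defs
begin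


inductive wk :: "'v sdigraph \<Rightarrow> 'v \<Rightarrow> 'v list \<Rightarrow> int list \<Rightarrow> 'v \<Rightarrow> bool" for E where
  wk_nil: "wk E u [] [] u"
| wk_cons: "(u, w, s) \<in> E \<Longrightarrow> wk E w vs ss z \<Longrightarrow> wk E u (u # vs) (s # ss) z"

lemma wk_append: "wk E a vs1 ss1 b \<Longrightarrow> wk E b vs2 ss2 c \<Longrightarrow> wk E a (vs1@vs2) (ss1@ss2) c"
  by (induction rule: wk.induct) (auto intro: wk.intros)

lemma wk_len: "wk E a vs ss b \<Longrightarrow> length ss = length vs"
  by (induction rule: wk.induct) auto

lemma wk_hd: "wk E a vs ss b \<Longrightarrow> vs \<noteq> [] \<Longrightarrow> hd vs = a"
  by (induction rule: wk.induct) auto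

lemma wk_nil_eq: "wk E a [] ss b \<Longrightarrow> a = b \<and> ss = []"
  by (auto elim: wk.cases)

lemma wk_first: "wk E a vs ss b \<Longrightarrow> (vs @ [b]) ! 0 = a"
  by (auto elim: wk.cases)

lemma wk_split: "wk E a (vs1 @ vs2) ss c \<Longrightarrow> \<exists>b ss1 ss2. ss = ss1 @ ss2 \<and> wk E a vs1 ss1 b \<and> wk E b vs2 ss2 c \<and> (vs2 \<noteq> [] \<longrightarrow> b = hd vs2)"
proof (induction vs1 arbitrary: a ss)
  case Nil
  then show ?case using wk_hd by (metis append_Nil wk_nil)
next
  case (Cons x vs1)
  from Cons.prems obtain w s ss' where h: "ss = s # ss'" "(a,w,s) \<in> E" "wk E w (vs1@vs2) ss' c" "x = a"
    by (auto elim: wk.cases)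
  then obtain b ss1 ss2 where "ss' = ss1@ss2" "wk E w vs1 ss1 b" "wk E b vs2 ss2 c" "vs2 \<noteq> [] \<longrightarrow> b = hd vs2"
    using Cons.IH by blast
  then show ?case using h by (metis append_Cons wk_cons)
qed

lemma wk_nth: "wk E a vs ss c \<Longrightarrow> t < length vs \<Longrightarrow> (vs!t, (vs@[c])!(Suc t), ss!t) \<in> E"
proof (induction arbitrary: t rule: wk.induct)
  case (wk_nil u)
  then show ?case by simp
next
  case (wk_cons u w s vs ss z)
  then show ?case
  proof (cases t)
    case 0
    then show ?thesis using wk_cons wk_first[OF wk_cons(2)] by simp
  next
    case (Suc t')
    then show ?thesis using wk_cons by simp
  qed
qed

lemma wk_last: "wk E a vs ss b \<Longrightarrow> vs \<noteq> [] \<Longrightarrow> \<exists>j s. (j, b, s) \<in> E"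
  by (induction rule: wk.induct) (auto elim: wk.cases)

lemma prod_pm: "\<forall>s\<in>set ss. s = -1 \<or> s = (1::int) \<Longrightarrow> prod_list ss = -1 \<or> prod_list ss = 1"
  by (induction ss) auto

lemma wk_signs: "wk E a vs ss c \<Longrightarrow> signed_digraph E \<Longrightarrow> \<forall>s\<in>set ss. s = -1 \<or> s = 1"
  by (induction rule: wk.induct) (auto simp: signed_digraph_def)

lemma wk_prod: "signed_digraph E \<Longrightarrow> wk E a vs ss c \<Longrightarrow> prod_list ss = -1 \<or> prod_list ss = 1"
  using wk_signs[of E a vs ss c] prod_pm[of ss] by simp

lemma neg_closed_walk:
  assumes "signed_digraph E" "wk E u vs ss u" "prod_list ss = -1"
  shows "\<exists>vs' ss'. is_cycle E vs' ss' \<and> prod_list ss' = -1"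
  using assms
proof (induction "length vs" arbitrary: u vs ss rule: less_induct)
  case less
  have len: "length ss = length vs" by (rule wk_len[OF less.prems(2)])
  have ne: "vs \<noteq> []" using less.prems(3) len by auto
  show ?case
  proof (cases "distinct vs")
    case True
    have "is_cycle E vs ss"
      unfolding is_cycle_def
    proof (intro conjI allI impI)
      fix t assume t: "t < length vs"
      have e: "(vs!t, (vs@[u])!(Suc t), ss!t) \<in> E" using wk_nth[OF less.prems(2) t] .
      show "(vs ! t, vs ! ((t + 1) mod length vs), ss ! t) \<in> E"
      proof (cases "Suc t < length vs")
        case True
        then show ?thesis using e by (simp add: nth_append)
      next
        case False
        then have "Suc t = length vs" using t by simp
        moreover have "vs ! 0 = u" using wk_hd[OF less.prems(2) ne] ne by (simp add: hd_conv_nth)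
        ultimately show ?thesis using e by (simp add: nth_append)
      qed
    qed (use True ne len in auto)
    then show ?thesis using less.prems(3) by blast
  next
    case False
    then obtain xs ys zs y where vs: "vs = xs@[y]@ys@[y]@zs" using not_distinct_decomp by blast
    obtain b ss1 r1 where s1: "ss = ss1 @ r1" "wk E u xs ss1 b" "wk E b ([y]@ys@[y]@zs) r1 u" "b = y"
      using wk_split[of E u xs "[y]@ys@[y]@zs" ss u] less.prems(2) vs by auto
    obtain b2 ss2 ss3 where s2: "r1 = ss2 @ ss3" "wk E y ([y]@ys) ss2 b2" "wk E b2 ([y]@zs) ss3 u" "b2 = y"
      using wk_split[of E y "[y]@ys" "[y]@zs" r1 u] s1 by auto
    have loop: "wk E y (y#ys) ss2 y" using s2 by simp
    have outer: "wk E u (xs @ y # zs) (ss1 @ ss3) u" using wk_append[OF s1(2)] s1(4) s2 by simp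
    have p: "prod_list ss = prod_list ss1 * prod_list ss2 * prod_list ss3" using s1 s2 by simp
    have p2: "prod_list ss2 = -1 \<or> prod_list ss2 = 1" using wk_prod[OF less.prems(1) loop] .
    show ?thesis
    proof (cases "prod_list ss2 = -1")
      case True
      show ?thesis
        by (rule less.hyps[OF _ less.prems(1) loop True]) (simp add: vs)
    next
      case False
      then have "prod_list (ss1 @ ss3) = -1" using p p2 less.prems(3) by (simp add: mult.commute)
      then show ?thesis
        by (intro less.hyps[OF _ less.prems(1) outer]) (auto simp: vs)
    qed
  qed
qed



lemma signed_id: "signed_digraph (interaction_digraph f)"
  unfolding signed_digraph_def interaction_digraph_def by auto

definition Sf :: "(('v \<Rightarrow> bool) \<Rightarrow> ('v \<Rightarrow> bool)) \<Rightarrow> 'v set" where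
  "Sf f = {v. \<not> ((\<exists>b. \<forall>x. f x v = b) \<and> (\<forall>i s. (v, i, s) \<notin> interaction_digraph f))}"

definition stable :: "(('v \<Rightarrow> bool) \<Rightarrow> ('v \<Rightarrow> bool)) \<Rightarrow> 'v set \<Rightarrow> ('v \<Rightarrow> bool) \<Rightarrow> bool" where
  "stable f C \<sigma> \<longleftrightarrow> (\<forall>x. (\<forall>u\<in>C. x u = \<sigma> u) \<longrightarrow> (\<forall>u\<in>C. f x u = \<sigma> u))"

definition ovr :: "'v set \<Rightarrow> ('v \<Rightarrow> bool) \<Rightarrow> ('v \<Rightarrow> bool) \<Rightarrow> ('v \<Rightarrow> bool)" where
  "ovr C \<sigma> x = (\<lambda>u. if u \<in> C then \<sigma> u else x u)"

definition freeze :: "(('v \<Rightarrow> bool) \<Rightarrow> ('v \<Rightarrow> bool)) \<Rightarrow> 'v set \<Rightarrow> ('v \<Rightarrow> bool) \<Rightarrow> (('v \<Rightarrow> bool) \<Rightarrow> ('v \<Rightarrow> bool))" where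
  "freeze f C \<sigma> = (\<lambda>x. f (ovr C \<sigma> x))"


lemma arc_pos: "\<not> x j \<Longrightarrow> \<not> f x i \<Longrightarrow> f (x(j:=True)) i \<Longrightarrow> (j,i,1) \<in> interaction_digraph f"
  unfolding interaction_digraph_def by (rule UnI1, blast)

lemma arc_neg: "\<not> x j \<Longrightarrow> f x i \<Longrightarrow> \<not> f (x(j:=True)) i \<Longrightarrow> (j,i,-1) \<in> interaction_digraph f"
  unfolding interaction_digraph_def by (rule UnI2, blast)

lemma flip_arc:
  assumes "f x i \<noteq> f (x(u:=c)) i"
  shows "\<exists>s. (u,i,s) \<in> interaction_digraph f \<and> (s = 1 \<longleftrightarrow> f (x(u:=True)) i)
          \<and> f (x(u:=False)) i \<noteq> f (x(u:=True)) i"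
proof -
  have xc: "x u \<noteq> c"
  proof
    assume "x u = c"
    then have "x(u:=c) = x" by auto
    then show False using assms by simp
  qed
  have d: "f (x(u:=False)) i \<noteq> f (x(u:=True)) i"
  proof (cases "x u")
    case True
    then have "x(u:=True) = x" "c = False" using xc by (auto simp: fun_upd_idem_iff)
    then show ?thesis using assms by simp
  next
    case False
    then have "x(u:=False) = x" "c = True" using xc by (auto simp: fun_upd_idem_iff)
    then show ?thesis using assms by simp
  qed
  have lo: "\<not> (x(u:=False)) u" "(x(u:=False))(u:=True) = x(u:=True)" by auto
  show ?thesis
  proof (cases "f (x(u:=True)) i")
    case True
    then have "(u,i,1) \<in> interaction_digraph f"
      using arc_pos[of "x(u:=False)" u f i] d lo by simp
    then show ?thesis using True d by blast
  next
    case False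
    then have "(u,i,-1) \<in> interaction_digraph f"
      using arc_neg[of "x(u:=False)" u f i] d lo by simp
    then show ?thesis using False d by auto
  qed
qed

lemma arc_nonconst:
  assumes "(j,i,s) \<in> interaction_digraph f"
  shows "\<exists>z. f z i \<noteq> f (z(j:=True)) i"
  using assms unfolding interaction_digraph_def by auto

lemma diff_induct:
  fixes y :: "'v::finite \<Rightarrow> 'b"
  assumes base: "P y"
    and step: "\<And>x u. x u \<noteq> y u \<Longrightarrow> P (x(u := y u)) \<Longrightarrow> P x"
  shows "P x"
proof (induction "card {u. x u \<noteq> y u}" arbitrary: x rule: less_induct)
  case less
  show ?case
  proof (cases "\<exists>u. x u \<noteq> y u")
    case False
    then have "x = y" by auto
    then show ?thesis using base by simp
  next
    case True
    then obtain u where u: "x u \<noteq> y u" by blast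
    have e: "{u'. (x(u := y u)) u' \<noteq> y u'} = {u. x u \<noteq> y u} - {u}" by auto
    have "card ({u. x u \<noteq> y u} - {u}) < card {u. x u \<noteq> y u}"
      by (rule card_Diff1_less) (use u in simp_all)
    then have "card {u'. (x(u := y u)) u' \<noteq> y u'} < card {u. x u \<noteq> y u}"
      unfolding e .
    then have "P (x(u := y u))" using less by blast
    then show ?thesis using step u by blast
  qed
qed

lemma no_in_const:
  fixes f :: "('v::finite \<Rightarrow> bool) \<Rightarrow> ('v \<Rightarrow> bool)"
  assumes "\<forall>u s. (u,i,s) \<notin> interaction_digraph f"
  shows "f x i = f y i"
proof (rule diff_induct[where y = y and P = "\<lambda>x. f x i = f y i"])
  fix x u assume "x u \<noteq> y u" "f (x(u := y u)) i = f y i"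
  then show "f x i = f y i" using flip_arc[of f x i u "y u"] assms by blast
qed simp



lemma CL:
  fixes f :: "('v::finite \<Rightarrow> bool) \<Rightarrow> ('v \<Rightarrow> bool)"
  assumes nnc: "no_negative_cycle (interaction_digraph f)" and ne: "Sf f \<noteq> {}"
  shows "\<exists>C \<sigma>. C \<noteq> {} \<and> C \<subseteq> Sf f \<and> stable f C \<sigma> \<and>
           ((\<exists>u\<in>C. \<exists>b. \<forall>x. f x u = b) \<or> stable f C (\<lambda>u. \<not> \<sigma> u))"
proof -
  define E where "E = interaction_digraph f"
  have sg: "signed_digraph E" using signed_id E_def by simp
  define reach where "reach a b \<longleftrightarrow> (\<exists>vs ss. wk E a vs ss b)" for a b
  have outS: "\<And>u w s. (u,w,s) \<in> E \<Longrightarrow> u \<in> Sf f" unfolding Sf_def E_def by blast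
  have wkS: "\<And>u vs ss v. wk E u vs ss v \<Longrightarrow> vs \<noteq> [] \<Longrightarrow> u \<in> Sf f"
    using outS by (auto elim: wk.cases)
  have reachS: "\<And>u v. reach u v \<Longrightarrow> v \<in> Sf f \<Longrightarrow> u \<in> Sf f"
  proof -
    fix u v assume "reach u v" "v \<in> Sf f"
    then obtain vs ss where w: "wk E u vs ss v" unfolding reach_def by blast
    show "u \<in> Sf f"
    proof (cases "vs = []")
      case True
      then show ?thesis using w wk_nil_eq \<open>v \<in> Sf f\<close> by metis
    next
      case False
      then show ?thesis using w wkS by blast
    qed
  qed
  have reach_trans: "\<And>a b c. reach a b \<Longrightarrow> reach b c \<Longrightarrow> reach a c"
    unfolding reach_def using wk_append by metis
  have reach_refl: "\<And>a. reach a a" unfolding reach_def by (meson wk.wk_nil)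
  obtain v where vS: "v \<in> Sf f" and vmin: "\<forall>u. u \<in> Sf f \<longrightarrow> card {w. reach w v} \<le> card {w. reach w u}"
    using ex_has_least_nat[of "\<lambda>v. v \<in> Sf f" _ "\<lambda>v. card {w. reach w v}"] ne by blast
  have vback: "\<And>u. reach u v \<Longrightarrow> reach v u"
  proof (rule ccontr)
    fix u assume r: "reach u v" "\<not> reach v u"
    have uS: "u \<in> Sf f" using reachS r vS by blast
    have "{w. reach w u} \<subseteq> {w. reach w v}" using r(1) reach_trans by blast
    moreover have "v \<in> {w. reach w v}" "v \<notin> {w. reach w u}" using reach_refl r(2) by auto
    ultimately have "{w. reach w u} \<subset> {w. reach w v}" by blast
    then have "card {w. reach w u} < card {w. reach w v}" by (simp add: psubset_card_mono)
    then show False using vmin uS by fastforce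
  qed
  define C where "C = {u. \<exists>vs ss. wk E u vs ss v \<and> vs \<noteq> []}"
  show ?thesis
  proof (cases "C = {}")
    case True
    have "\<forall>u s. (u,v,s) \<notin> interaction_digraph f"
    proof (intro allI notI)
      fix u s assume "(u,v,s) \<in> interaction_digraph f"
      then have "wk E u [u] [s] v" using E_def wk_cons[OF _ wk_nil] by metis
      then show False using True C_def by blast
    qed
    then have cst: "\<forall>x. f x v = f undefined v" using no_in_const by blast
    show ?thesis
      apply (rule exI[of _ "{v}"], rule exI[of _ "\<lambda>_. f undefined v"])
      using cst vS unfolding stable_def by auto
  next
    case False
    have CS: "C \<subseteq> Sf f" unfolding C_def using wkS by auto
    have Creach: "\<And>u. u \<in> C \<Longrightarrow> reach u v \<and> reach v u"
    proof -
      fix u assume "u \<in> C"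
      then have "reach u v" unfolding C_def reach_def by auto
      then show "reach u v \<and> reach v u" using vback by blast
    qed
    have C_in: "\<And>j i s. (j,i,s) \<in> E \<Longrightarrow> i \<in> C \<Longrightarrow> j \<in> C"
    proof -
      fix j i s assume a: "(j,i,s) \<in> E" "i \<in> C"
      then obtain vs ss where "wk E i vs ss v" unfolding C_def by blast
      then have "wk E j (j#vs) (s#ss) v" by (rule wk_cons[OF a(1)])
      then show "j \<in> C" unfolding C_def by blast
    qed
    have C_arc: "\<And>i. i \<in> C \<Longrightarrow> \<exists>j s. (j,i,s) \<in> E"
    proof -
      fix i assume iC: "i \<in> C"
      then obtain vs1 ss1 where w1: "wk E i vs1 ss1 v" "vs1 \<noteq> []" unfolding C_def by blast
      obtain vs2 ss2 where w2: "wk E v vs2 ss2 i" using Creach iC reach_def by blast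
      have "wk E i (vs1@vs2) (ss1@ss2) i" using w1(1) w2 by (rule wk_append)
      then show "\<exists>j s. (j,i,s) \<in> E" by (rule wk_last) (simp add: w1(2))
    qed
    define \<tau> where "\<tau> u = (SOME p. \<exists>vs ss. wk E v vs ss u \<and> prod_list ss = p)" for u
    have \<tau>_ex: "\<And>u. u \<in> C \<Longrightarrow> \<exists>vs ss. wk E v vs ss u \<and> prod_list ss = \<tau> u"
    proof -
      fix u assume "u \<in> C"
      then have "reach v u" using Creach by blast
      then have "\<exists>p vs ss. wk E v vs ss u \<and> prod_list ss = p" unfolding reach_def by auto
      then show "\<exists>vs ss. wk E v vs ss u \<and> prod_list ss = \<tau> u" unfolding \<tau>_def by (rule someI_ex)
    qed
    have uniq: "\<And>u vs1 ss1 vs2 ss2. u \<in> C \<Longrightarrow> wk E v vs1 ss1 u \<Longrightarrow> wk E v vs2 ss2 u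
                  \<Longrightarrow> prod_list ss1 = prod_list ss2"
    proof (rule ccontr)
      fix u vs1 ss1 vs2 ss2
      assume a: "u \<in> C" "wk E v vs1 ss1 u" "wk E v vs2 ss2 u" "prod_list ss1 \<noteq> prod_list ss2"
      have "reach u v" using Creach a(1) by blast
      then obtain vs3 ss3 where w3: "wk E u vs3 ss3 v" unfolding reach_def by auto
      have c1: "wk E v (vs1@vs3) (ss1@ss3) v" by (rule wk_append[OF a(2) w3])
      have c2: "wk E v (vs2@vs3) (ss2@ss3) v" by (rule wk_append[OF a(3) w3])
      have p1: "prod_list ss1 = -1 \<or> prod_list ss1 = 1" using wk_prod[OF sg a(2)] .
      have p2: "prod_list ss2 = -1 \<or> prod_list ss2 = 1" using wk_prod[OF sg a(3)] .
      have p3: "prod_list ss3 = -1 \<or> prod_list ss3 = 1" using wk_prod[OF sg w3] .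
      have "prod_list (ss1@ss3) = -1 \<or> prod_list (ss2@ss3) = -1" using p1 p2 p3 a(4) by auto
      then obtain vs' ss' where "is_cycle E vs' ss'" "prod_list ss' = -1"
        using neg_closed_walk[OF sg c1] neg_closed_walk[OF sg c2] by metis
      then show False using nnc E_def no_negative_cycle_def by blast
    qed
    have \<tau>pm: "\<And>u. u \<in> C \<Longrightarrow> \<tau> u = -1 \<or> \<tau> u = 1"
    proof -
      fix u assume "u \<in> C"
      then obtain vs ss where "wk E v vs ss u" "prod_list ss = \<tau> u" using \<tau>_ex by meson
      then show "\<tau> u = -1 \<or> \<tau> u = 1" using wk_prod[OF sg] by metis
    qed
    have cons: "\<And>j i s. (j,i,s) \<in> E \<Longrightarrow> i \<in> C \<Longrightarrow> \<tau> i = \<tau> j * s"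
    proof -
      fix j i s assume a: "(j,i,s) \<in> E" "i \<in> C"
      have jC: "j \<in> C" using C_in a by blast
      obtain vs ss where w: "wk E v vs ss j" "prod_list ss = \<tau> j" using \<tau>_ex jC by meson
      have "wk E j [j] [s] i" using wk_cons[OF a(1) wk_nil] .
      then have w2: "wk E v (vs@[j]) (ss@[s]) i" by (rule wk_append[OF w(1)])
      obtain vs' ss' where w': "wk E v vs' ss' i" "prod_list ss' = \<tau> i" using \<tau>_ex a(2) by meson
      have "prod_list (ss@[s]) = prod_list ss'" using uniq[OF a(2) w2 w'(1)] .
      then show "\<tau> i = \<tau> j * s" using w w' by simp
    qed
    have sgE: "\<And>j i s. (j,i,s) \<in> E \<Longrightarrow> s = -1 \<or> s = 1"
    proof -
      fix j i s assume "(j,i,s) \<in> E"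
      from bspec[OF sg[unfolded signed_digraph_def] this] show "s = -1 \<or> s = 1" by simp
    qed
    define \<sigma> where "\<sigma> u = (\<tau> u = -1)" for u
    have mono: "\<And>i x y. i \<in> C \<Longrightarrow> (\<forall>u\<in>C. x u \<noteq> \<sigma> u \<longrightarrow> y u \<noteq> \<sigma> u) \<Longrightarrow> f x i \<noteq> \<sigma> i \<Longrightarrow> f y i \<noteq> \<sigma> i"
    proof -
      fix i x y assume iC: "i \<in> C"
      have "(\<forall>u\<in>C. x u \<noteq> \<sigma> u \<longrightarrow> y u \<noteq> \<sigma> u) \<longrightarrow> f x i \<noteq> \<sigma> i \<longrightarrow> f y i \<noteq> \<sigma> i"
      proof (rule diff_induct[where y = y and P = "\<lambda>x. (\<forall>u\<in>C. x u \<noteq> \<sigma> u \<longrightarrow> y u \<noteq> \<sigma> u) \<longrightarrow> f x i \<noteq> \<sigma> i \<longrightarrow> f y i \<noteq> \<sigma> i"])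
        show "(\<forall>u\<in>C. y u \<noteq> \<sigma> u \<longrightarrow> y u \<noteq> \<sigma> u) \<longrightarrow> f y i \<noteq> \<sigma> i \<longrightarrow> f y i \<noteq> \<sigma> i" by simp
      next
        fix x u assume d: "x u \<noteq> y u"
          and ih: "(\<forall>u'\<in>C. (x(u:=y u)) u' \<noteq> \<sigma> u' \<longrightarrow> y u' \<noteq> \<sigma> u') \<longrightarrow> f (x(u:=y u)) i \<noteq> \<sigma> i \<longrightarrow> f y i \<noteq> \<sigma> i"
        show "(\<forall>u\<in>C. x u \<noteq> \<sigma> u \<longrightarrow> y u \<noteq> \<sigma> u) \<longrightarrow> f x i \<noteq> \<sigma> i \<longrightarrow> f y i \<noteq> \<sigma> i"
        proof (intro impI)
          assume le: "\<forall>u\<in>C. x u \<noteq> \<sigma> u \<longrightarrow> y u \<noteq> \<sigma> u" and g: "f x i \<noteq> \<sigma> i"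
          have le': "\<forall>u'\<in>C. (x(u:=y u)) u' \<noteq> \<sigma> u' \<longrightarrow> y u' \<noteq> \<sigma> u'" using le by auto
          have "f (x(u:=y u)) i \<noteq> \<sigma> i"
          proof (cases "f x i = f (x(u:=y u)) i")
            case True
            then show ?thesis using g by simp
          next
            case False
            then obtain s where s: "(u,i,s) \<in> E" "s = 1 \<longleftrightarrow> f (x(u:=True)) i"
                "f (x(u:=False)) i \<noteq> f (x(u:=True)) i"
              using flip_arc[of f x i u "y u"] unfolding E_def by blast
            have uC: "u \<in> C" using C_in s(1) iC by blast
            have xu: "x u = \<sigma> u"
            proof (rule ccontr)
              assume n: "x u \<noteq> \<sigma> u"
              then have "y u \<noteq> \<sigma> u" using le uC by blast
              then show False using d n by (cases "x u"; cases "y u"; cases "\<sigma> u") simp_all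
            qed
            have ti: "\<tau> i = \<tau> u * s" using cons s(1) iC by blast
            have tu: "\<tau> u = -1 \<or> \<tau> u = 1" using \<tau>pm uC by blast
            have ss: "s = -1 \<or> s = 1" using sgE s(1) by blast
            show ?thesis
            proof (cases "x u")
              case True
              then have e: "x(u:=True) = x" "x(u:=y u) = x(u:=False)" using d by (auto simp: fun_upd_idem_iff)
              have "\<tau> u = -1" using True xu \<sigma>_def by simp
              then have "\<tau> i = - s" using ti by simp
              then have "\<sigma> i = (s = 1)" using ss \<sigma>_def by auto
              then show ?thesis using g s e by auto
            next
              case False
              then have e: "x(u:=False) = x" "x(u:=y u) = x(u:=True)" using d by (auto simp: fun_upd_idem_iff)
              have "\<tau> u = 1" using False xu \<sigma>_def tu by auto
              then have "\<tau> i = s" using ti by simp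
              then have "\<sigma> i = (s = -1)" using \<sigma>_def by auto
              then show ?thesis using g s e ss by auto
            qed
          qed
          then show "f y i \<noteq> \<sigma> i" using ih le' by blast
        qed
      qed
      then show "(\<forall>u\<in>C. x u \<noteq> \<sigma> u \<longrightarrow> y u \<noteq> \<sigma> u) \<Longrightarrow> f x i \<noteq> \<sigma> i \<Longrightarrow> f y i \<noteq> \<sigma> i" by blast
    qed
    have ncst: "\<And>i. i \<in> C \<Longrightarrow> \<exists>z z'. f z i \<noteq> f z' i"
    proof -
      fix i assume iC: "i \<in> C"
      obtain j s where "(j,i,s) \<in> E" using C_arc iC by blast
      then have "(j,i,s) \<in> interaction_digraph f" unfolding E_def .
      then obtain z where "f z i \<noteq> f (z(j:=True)) i" using arc_nonconst by metis
      then show "\<exists>z z'. f z i \<noteq> f z' i" by blast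
    qed
    have st1: "stable f C \<sigma>" unfolding stable_def
    proof (intro allI impI ballI)
      fix x i assume xa: "\<forall>u\<in>C. x u = \<sigma> u" and iC: "i \<in> C"
      show "f x i = \<sigma> i"
      proof (rule ccontr)
        assume g: "f x i \<noteq> \<sigma> i"
        have all: "\<And>y. f y i \<noteq> \<sigma> i" using mono[OF iC _ g] xa by auto
        obtain z z' where "f z i \<noteq> f z' i" using ncst iC by blast
        then show False using all[of z] all[of z'] by auto
      qed
    qed
    have st2: "stable f C (\<lambda>u. \<not> \<sigma> u)" unfolding stable_def
    proof (intro allI impI ballI)
      fix x i assume xa: "\<forall>u\<in>C. x u = (\<not> \<sigma> u)" and iC: "i \<in> C"
      show "f x i = (\<not> \<sigma> i)"
      proof (rule ccontr)
        assume g: "f x i \<noteq> (\<not> \<sigma> i)"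
        have all: "\<And>y. f y i = \<sigma> i"
        proof (rule ccontr)
          fix y assume ny: "f y i \<noteq> \<sigma> i"
          have "f x i \<noteq> \<sigma> i" by (rule mono[OF iC _ ny]) (use xa in auto)
          then show False using g by simp
        qed
        obtain z z' where "f z i \<noteq> f z' i" using ncst iC by blast
        then show False using all[of z] all[of z'] by auto
      qed
    qed
    show ?thesis using False CS st1 st2 by blast
  qed
qed



lemma id_mem: "(j,i,s) \<in> interaction_digraph f \<longleftrightarrow>
   (s = 1 \<and> (\<exists>x. \<not> x j \<and> \<not> f x i \<and> f (x(j:=True)) i)) \<or> (s = -1 \<and> (\<exists>x. \<not> x j \<and> f x i \<and> \<not> f (x(j:=True)) i))"
  unfolding interaction_digraph_def by auto

lemma ovr_upd_out: "j \<notin> C \<Longrightarrow> ovr C \<sigma> (x(j:=b)) = (ovr C \<sigma> x)(j:=b)"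
  unfolding ovr_def by (rule ext) auto

lemma ovr_upd_in: "j \<in> C \<Longrightarrow> ovr C \<sigma> (x(j:=b)) = ovr C \<sigma> x"
  unfolding ovr_def by (rule ext) auto

lemma freeze_sub:
  assumes h: "(j,i,s) \<in> interaction_digraph (freeze f C \<sigma>)"
  shows "(j,i,s) \<in> interaction_digraph f \<and> j \<notin> C"
proof -
  have jC: "j \<notin> C"
  proof
    assume "j \<in> C"
    then have "\<forall>x. freeze f C \<sigma> (x(j:=True)) = freeze f C \<sigma> x" by (simp add: freeze_def ovr_upd_in)
    then show False using h by (auto simp: id_mem)
  qed
  have e: "\<And>x. freeze f C \<sigma> (x(j:=True)) = f ((ovr C \<sigma> x)(j:=True))" using jC by (simp add: freeze_def ovr_upd_out)
  have e2: "\<And>x. freeze f C \<sigma> x = f (ovr C \<sigma> x)" by (simp add: freeze_def)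
  have e3: "\<And>x. \<not> x j \<Longrightarrow> \<not> (ovr C \<sigma> x) j" using jC by (simp add: ovr_def)
  from h consider (p) x where "s = 1" "\<not> x j" "\<not> freeze f C \<sigma> x i" "freeze f C \<sigma> (x(j:=True)) i"
    | (n) x where "s = -1" "\<not> x j" "freeze f C \<sigma> x i" "\<not> freeze f C \<sigma> (x(j:=True)) i"
    unfolding id_mem by blast
  then show ?thesis
  proof cases
    case p
    have "(j,i,1) \<in> interaction_digraph f"
      by (rule arc_pos[of "ovr C \<sigma> x"]) (use p e e2 e3 in simp_all)
    then show ?thesis using jC p by simp
  next
    case n
    have "(j,i,-1) \<in> interaction_digraph f"
      by (rule arc_neg[of "ovr C \<sigma> x"]) (use n e e2 e3 in simp_all)
    then show ?thesis using jC n by simp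
  qed
qed

lemma cyc_sub: "E' \<subseteq> E \<Longrightarrow> is_cycle E' vs ss \<Longrightarrow> is_cycle E vs ss"
  unfolding is_cycle_def by (meson subsetD)

lemma nnc_sub: "E' \<subseteq> E \<Longrightarrow> no_negative_cycle E \<Longrightarrow> no_negative_cycle E'"
  unfolding no_negative_cycle_def using cyc_sub by metis

lemma nnc_freeze: "no_negative_cycle (interaction_digraph f) \<Longrightarrow> no_negative_cycle (interaction_digraph (freeze f C \<sigma>))"
  by (rule nnc_sub[of _ "interaction_digraph f"]) (auto dest: freeze_sub)

lemma freeze_C: "stable f C \<sigma> \<Longrightarrow> u \<in> C \<Longrightarrow> freeze f C \<sigma> x u = \<sigma> u"
  unfolding stable_def freeze_def ovr_def by auto

lemma freeze_fp: assumes "stable f C \<sigma>" "freeze f C \<sigma> x = x" shows "f x = x"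
proof -
  have "\<forall>u\<in>C. x u = \<sigma> u" using freeze_C[OF assms(1)] assms(2) by metis
  then have "ovr C \<sigma> x = x" unfolding ovr_def by (auto intro!: ext)
  then show ?thesis using assms(2) by (simp add: freeze_def)
qed

lemma fp_freeze: assumes "f x = x" "\<forall>u\<in>C. x u = \<sigma> u" shows "freeze f C \<sigma> x = x"
proof -
  have "ovr C \<sigma> x = x" using assms(2) unfolding ovr_def by (auto intro!: ext)
  then show ?thesis using assms(1) by (simp add: freeze_def)
qed

lemma freeze_S: assumes st: "stable f C \<sigma>" shows "Sf (freeze f C \<sigma>) \<subseteq> Sf f - C"
proof
  fix v assume v: "v \<in> Sf (freeze f C \<sigma>)"
  have noout: "\<And>i s. (v,i,s) \<in> interaction_digraph (freeze f C \<sigma>) \<Longrightarrow> v \<notin> C \<and> (v,i,s) \<in> interaction_digraph f"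
    using freeze_sub by metis
  have "v \<notin> C"
  proof
    assume vC: "v \<in> C"
    then have "\<forall>x. freeze f C \<sigma> x v = \<sigma> v" using freeze_C[OF st] by blast
    then show False using v noout vC unfolding Sf_def by blast
  qed
  moreover have "v \<in> Sf f"
  proof (rule ccontr)
    assume "v \<notin> Sf f"
    then obtain b where b: "\<forall>x. f x v = b" and no: "\<forall>i s. (v,i,s) \<notin> interaction_digraph f"
      unfolding Sf_def by blast
    have "\<forall>x. freeze f C \<sigma> x v = b" using b by (simp add: freeze_def)
    then show False using v noout no unfolding Sf_def by blast
  qed
  ultimately show "v \<in> Sf f - C" by blast
qed

lemma const_all:
  assumes "Sf f = {}" shows "f x = f y"
proof (rule ext)
  fix v
  have "v \<notin> Sf f" using assms by blast
  then obtain b where "\<forall>x. f x v = b" unfolding Sf_def by blast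
  then show "f x v = f y v" by simp
qed

lemma exist_fp:
  fixes f :: "('v::finite \<Rightarrow> bool) \<Rightarrow> ('v \<Rightarrow> bool)"
  shows "no_negative_cycle (interaction_digraph f) \<Longrightarrow> \<exists>x. f x = x"
proof (induction "card (Sf f)" arbitrary: f rule: less_induct)
  case less
  show ?case
  proof (cases "Sf f = {}")
    case True
    then have "f (f undefined) = f undefined" using const_all by metis
    then show ?thesis by blast
  next
    case False
    obtain C \<sigma> where C: "C \<noteq> {}" "C \<subseteq> Sf f" "stable f C \<sigma>" using CL[OF less.prems False] by blast
    have "Sf (freeze f C \<sigma>) \<subset> Sf f" using freeze_S[OF C(3)] C(1) C(2) by blast
    then have "card (Sf (freeze f C \<sigma>)) < card (Sf f)" by (simp add: psubset_card_mono)
    moreover have "no_negative_cycle (interaction_digraph (freeze f C \<sigma>))" using nnc_freeze less.prems by blast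
    ultimately obtain x where "freeze f C \<sigma> x = x" using less.hyps by blast
    then show ?thesis using freeze_fp[OF C(3)] by blast
  qed
qed

lemma KL:
  fixes f :: "('v::finite \<Rightarrow> bool) \<Rightarrow> ('v \<Rightarrow> bool)"
  assumes nnc: "no_negative_cycle (interaction_digraph f)" and ne: "Sf f \<noteq> {}" and u: "\<exists>!x. f x = x"
  shows "\<exists>i\<in>Sf f. \<exists>b. \<forall>x. f x i = b"
proof (rule ccontr)
  assume nc: "\<not> (\<exists>i\<in>Sf f. \<exists>b. \<forall>x. f x i = b)"
  obtain C \<sigma> where C: "C \<noteq> {}" "C \<subseteq> Sf f" "stable f C \<sigma>"
      "(\<exists>u\<in>C. \<exists>b. \<forall>x. f x u = b) \<or> stable f C (\<lambda>u. \<not> \<sigma> u)"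
    using CL[OF nnc ne] by blast
  have st2: "stable f C (\<lambda>u. \<not> \<sigma> u)" using C(4) C(2) nc by blast
  obtain x1 where x1: "freeze f C \<sigma> x1 = x1" using exist_fp[OF nnc_freeze[OF nnc]] by blast
  obtain x2 where x2: "freeze f C (\<lambda>u. \<not> \<sigma> u) x2 = x2" using exist_fp[OF nnc_freeze[OF nnc]] by blast
  have f1: "f x1 = x1" using freeze_fp[OF C(3) x1] .
  have f2: "f x2 = x2" using freeze_fp[OF st2 x2] .
  obtain c where c: "c \<in> C" using C(1) by blast
  have "x1 c = \<sigma> c" using freeze_C[OF C(3) c, of x1] x1 by simp
  moreover have "x2 c = (\<not> \<sigma> c)" using freeze_C[OF st2 c, of x2] x2 by simp
  ultimately have "x1 \<noteq> x2" by auto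
  then show False using u f1 f2 by blast
qed

lemma wu_cons: "word_update f (j#w) x = word_update f w (async_update f j x)"
  by (simp add: word_update_def)

lemma wu_append: "word_update f (w1@w2) x = word_update f w2 (word_update f w1 x)"
  by (simp add: word_update_def)

lemma wu_fp: "f x = x \<Longrightarrow> word_update f w x = x"
proof (induction w)
  case Nil
  then show ?case by (simp add: word_update_def)
next
  case (Cons j w)
  have "async_update f j x = x" using Cons.prems by (simp add: async_update_def)
  then show ?case using Cons by (simp add: wu_cons)
qed

lemma wu_last: "(\<forall>y. f y u = b) \<Longrightarrow> u \<in> set w \<Longrightarrow> word_update f w x u = b"
proof (induction w rule: rev_induct)
  case Nil
  then show ?case by simp
next
  case (snoc j w)
  show ?case
  proof (cases "j = u")
    case True
    then show ?thesis using snoc.prems by (simp add: wu_append word_update_def async_update_def)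
  next
    case False
    then have "u \<in> set w" using snoc.prems by simp
    then show ?thesis using snoc False by (simp add: wu_append word_update_def async_update_def)
  qed
qed

lemma wu_run:
  assumes "\<forall>y. y i = b \<longrightarrow> g y = f y" "\<forall>y. f y i = b"
  shows "y i = b \<Longrightarrow> word_update f w y = word_update g w y"
proof (induction w arbitrary: y)
  case Nil
  then show ?case by (simp add: word_update_def)
next
  case (Cons j w)
  have e: "async_update f j y = async_update g j y" using assms Cons.prems by (simp add: async_update_def)
  have "async_update f j y i = b" using assms(2) Cons.prems by (auto simp: async_update_def)
  then show ?case using Cons.IH e by (simp add: wu_cons)
qed

lemma wu_filt:
  assumes "\<forall>y. g y i = b"
  shows "y i = b \<Longrightarrow> word_update g w y = word_update g (filter (\<lambda>j. j \<noteq> i) w) y"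
proof (induction w arbitrary: y)
  case Nil
  then show ?case by (simp add: word_update_def)
next
  case (Cons j w)
  show ?case
  proof (cases "j = i")
    case True
    have "async_update g j y = y" using True assms Cons.prems by (auto simp: async_update_def)
    then show ?thesis using Cons True by (simp add: wu_cons)
  next
    case False
    have "async_update g j y i = b" using False Cons.prems by (simp add: async_update_def)
    then show ?thesis using Cons False by (simp add: wu_cons)
  qed
qed

lemma T:
  fixes f :: "('v::finite \<Rightarrow> bool) \<Rightarrow> ('v \<Rightarrow> bool)"
  shows "no_negative_cycle (interaction_digraph f) \<Longrightarrow> (\<exists>!x. f x = x) \<Longrightarrow> \<exists>w. distinct w \<and> synchronizing_word f w"
proof (induction "card (Sf f)" arbitrary: f rule: less_induct)
  case less
  show ?case
  proof (cases "Sf f = {}")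
    case True
    obtain w :: "'v list" where w: "set w = UNIV" "distinct w" using finite_distinct_list[OF finite_UNIV] by blast
    have "\<And>x. word_update f w x = f undefined"
    proof (rule ext)
      fix x u
      have "\<forall>y. f y u = f undefined u" using const_all[OF True] by metis
      then show "word_update f w x u = f undefined u" using wu_last w(1) by (metis UNIV_I)
    qed
    then show ?thesis using w(2) unfolding synchronizing_word_def by blast
  next
    case False
    obtain i b where i: "i \<in> Sf f" "\<forall>x. f x i = b" using KL[OF less.prems(1) False less.prems(2)] by blast
    define g where "g = freeze f {i} (\<lambda>_. b)"
    have st: "stable f {i} (\<lambda>_. b)" using i(2) by (simp add: stable_def)
    have "Sf g \<subset> Sf f" using freeze_S[OF st] i(1) unfolding g_def by blast
    then have "card (Sf g) < card (Sf f)" by (simp add: psubset_card_mono)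
    moreover have "no_negative_cycle (interaction_digraph g)" using nnc_freeze less.prems(1) g_def by blast
    moreover have "\<exists>!x. g x = x"
    proof -
      obtain x0 where x0: "f x0 = x0" "\<forall>y. f y = y \<longrightarrow> y = x0" using less.prems(2) by blast
      have "x0 i = b" using x0(1) i(2) by metis
      then have "g x0 = x0" using fp_freeze[of f x0 "{i}" "\<lambda>_. b", OF x0(1)] g_def by simp
      moreover have "\<forall>y. g y = y \<longrightarrow> y = x0" using freeze_fp[OF st] x0(2) g_def by blast
      ultimately show ?thesis by blast
    qed
    ultimately obtain w' where w': "distinct w'" "synchronizing_word g w'" using less.hyps by blast
    then obtain c where c: "\<forall>x. word_update g w' x = c" unfolding synchronizing_word_def by blast
    have gi: "\<forall>y. g y i = b" using freeze_C[OF st] g_def by simp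
    have gf: "\<forall>y. y i = b \<longrightarrow> g y = f y"
    proof (intro allI impI)
      fix y :: "'v \<Rightarrow> bool" assume "y i = b"
      then have "ovr {i} (\<lambda>_. b) y = y" unfolding ovr_def by (auto intro!: ext)
      then show "g y = f y" unfolding g_def freeze_def by simp
    qed
    define w where "w = i # filter (\<lambda>j. j \<noteq> i) w'"
    have "distinct w" using w'(1) unfolding w_def by simp
    moreover have "\<forall>x. word_update f w x = c"
    proof
      fix x
      let ?y = "async_update f i x"
      have yi: "?y i = b" using i(2) by (simp add: async_update_def)
      have "word_update f w x = word_update f (filter (\<lambda>j. j \<noteq> i) w') ?y" unfolding w_def by (simp add: wu_cons)
      also have "\<dots> = word_update g (filter (\<lambda>j. j \<noteq> i) w') ?y" using wu_run[of i b g f, where y = "async_update f i x", OF gf i(2) yi] .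
      also have "\<dots> = word_update g w' ?y" using wu_filt[of g i b, where y = "async_update f i x", OF gi yi] by simp
      also have "\<dots> = c" using c by simp
      finally show "word_update f w x = c" .
    qed
    ultimately show ?thesis unfolding synchronizing_word_def by blast
  qed
qed



theorem proposition8:
  fixes G :: "('v::finite) sdigraph"
    and f :: "('v \<Rightarrow> bool) \<Rightarrow> ('v \<Rightarrow> bool)"
    and n :: nat
  assumes "signed_digraph G"
    and "n = card (UNIV :: 'v set)"
    and "no_negative_cycle G"
    and "interaction_digraph f = G"
  shows "((\<exists>!x. f x = x) \<longleftrightarrow> (\<exists>w. length w = n \<and> synchronizing_word f w))
       \<and> ((\<exists>w. length w = n \<and> synchronizing_word f w) \<longleftrightarrow> synchronizing f)"
proof -
  have nnc: "no_negative_cycle (interaction_digraph f)" using assms(3,4) by simp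
  have A: "(\<exists>!x. f x = x) \<Longrightarrow> \<exists>w. length w = n \<and> synchronizing_word f w"
  proof -
    assume "\<exists>!x. f x = x"
    then obtain w where w: "distinct w" "synchronizing_word f w" using T[OF nnc] by blast
    then obtain c where c: "\<forall>x. word_update f w x = c" unfolding synchronizing_word_def by blast
    have "length w = card (set w)" using distinct_card[OF w(1)] by simp
    also have "\<dots> \<le> n" using assms(2) by (simp add: card_mono)
    finally have le: "length w \<le> n" .
    define w2 where "w2 = w @ replicate (n - length w) (undefined :: 'v)"
    have "length w2 = n" using le unfolding w2_def by simp
    moreover have "\<forall>x. word_update f w2 x = word_update f (replicate (n - length w) undefined) c"
      unfolding w2_def using c by (simp add: wu_append)
    ultimately show ?thesis unfolding synchronizing_word_def by blast
  qed
  have B: "\<And>w. synchronizing_word f w \<Longrightarrow> \<exists>!x. f x = x"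
  proof -
    fix w assume "synchronizing_word f w"
    then obtain c where c: "\<forall>x. word_update f w x = c" unfolding synchronizing_word_def by blast
    obtain x where x: "f x = x" using exist_fp[OF nnc] by blast
    have "\<forall>y. f y = y \<longrightarrow> y = c" using c wu_fp by metis
    then show "\<exists>!x. f x = x" using x by blast
  qed
  show ?thesis
  proof (intro conjI iffI)
    assume "\<exists>!x. f x = x"
    then show "\<exists>w. length w = n \<and> synchronizing_word f w" by (rule A)
  next
    assume "\<exists>w. length w = n \<and> synchronizing_word f w"
    then obtain w where "synchronizing_word f w" by blast
    then show "\<exists>!x. f x = x" by (rule B)
  next
    assume "\<exists>w. length w = n \<and> synchronizing_word f w"
    then obtain w where "synchronizing_word f w" by blast
    then show "synchronizing f" unfolding synchronizing_def by blast
  next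
    assume "synchronizing f"
    then obtain w where "synchronizing_word f w" unfolding synchronizing_def by blast
    then have "\<exists>!x. f x = x" by (rule B)
    then show "\<exists>w. length w = n \<and> synchronizing_word f w" by (rule A)
  qed
qed

end
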